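(* Let $(S,* )$ be an LD-system. Then $(\widehat S, \vec{*}, \frown)$ is an ALD-system.
   Context: An LD-system is a set with a binary operation $*$ satisfying $x*(y*z)=(x*y)*(x*z)$ (LD). An ALD-system is a set with two binary operations $*,\circ$ satisfying (LD), $x*(y*z)=(x\circ y)*z$ and $x*(y\circ z)=(x*y)\circ(x*z)$. $\widehat S$ is the set of all finite nonempty sequences of elements of $S$; for $\vec s=(s_1,\dots,s_p)$ and $\vec t=(t_1,\dots,t_q)$, $\vec s\frown\vec t=(s_1,\dots,s_p,t_1,\dots,t_q)$ is concatenation and $\vec s\mathbin{\vec{*}}\vec t=(s_1*\cdots*s_p*t_1,\dots,s_1*\cdots*s_p*t_q)$, where missing parentheses are added on the right ($a*b*c$ means $a*(b*c)$). *)

theory Defs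
  imports Main
begin

definition LD_system :: "'a set \<Rightarrow> ('a \<Rightarrow> 'a \<Rightarrow> 'a) \<Rightarrow> bool" where
  "LD_system S op \<longleftrightarrow>
     (\<forall>x\<in>S. \<forall>y\<in>S. op x y \<in> S) \<and>
     (\<forall>x\<in>S. \<forall>y\<in>S. \<forall>z\<in>S. op x (op y z) = op (op x y) (op x z))"

definition ALD_system :: "'a set \<Rightarrow> ('a \<Rightarrow> 'a \<Rightarrow> 'a) \<Rightarrow> ('a \<Rightarrow> 'a \<Rightarrow> 'a) \<Rightarrow> bool" where
  "ALD_system A st ci \<longleftrightarrow>
     (\<forall>x\<in>A. \<forall>y\<in>A. st x y \<in> A) \<and>
     (\<forall>x\<in>A. \<forall>y\<in>A. ci x y \<in> A) \<and>
     (\<forall>x\<in>A. \<forall>y\<in>A. \<forall>z\<in>A. st x (st y z) = st (st x y) (st x z)) \<and>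
     (\<forall>x\<in>A. \<forall>y\<in>A. \<forall>z\<in>A. st x (st y z) = st (ci x y) z) \<and>
     (\<forall>x\<in>A. \<forall>y\<in>A. \<forall>z\<in>A. st x (ci y z) = ci (st x y) (st x z))"

definition seqs :: "'a set \<Rightarrow> 'a list set" where
  "seqs S = {xs. xs \<noteq> [] \<and> set xs \<subseteq> S}"

definition iter_op :: "('a \<Rightarrow> 'a \<Rightarrow> 'a) \<Rightarrow> 'a list \<Rightarrow> 'a \<Rightarrow> 'a" where
  "iter_op op s t = foldr op s t"

definition vec_op :: "('a \<Rightarrow> 'a \<Rightarrow> 'a) \<Rightarrow> 'a list \<Rightarrow> 'a list \<Rightarrow> 'a list" where
  "vec_op op s t = map (iter_op op s) t"

end

theory Submission
  imports Defs
begin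

lemma F_closed:
  assumes cl: "\<forall>x\<in>S. \<forall>y\<in>S. op x y \<in> S"
  shows "set s \<subseteq> S \<Longrightarrow> t \<in> S \<Longrightarrow> foldr op s t \<in> S"
  using cl by (induction s) auto

lemma F_dist:
  assumes cl: "\<forall>x\<in>S. \<forall>y\<in>S. op x y \<in> S"
    and ld: "\<forall>x\<in>S. \<forall>y\<in>S. \<forall>z\<in>S. op x (op y z) = op (op x y) (op x z)"
  shows "set s \<subseteq> S \<Longrightarrow> y \<in> S \<Longrightarrow> z \<in> S \<Longrightarrow>
     foldr op s (op y z) = op (foldr op s y) (foldr op s z)"
proof (induction s)
  case Nil then show ?case by simp
next
  case (Cons a s)
  then have "foldr op s y \<in> S" "foldr op s z \<in> S" "a \<in> S"
    using F_closed[OF cl] by auto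
  then have "op a (op (foldr op s y) (foldr op s z)) = op (op a (foldr op s y)) (op a (foldr op s z))"
    using ld by blast
  moreover have "foldr op s (op y z) = op (foldr op s y) (foldr op s z)"
    using Cons.IH Cons.prems by simp
  ultimately show ?case by (simp only: foldr.simps o_apply)
qed

lemma F_gen:
  assumes cl: "\<forall>x\<in>S. \<forall>y\<in>S. op x y \<in> S"
    and ld: "\<forall>x\<in>S. \<forall>y\<in>S. \<forall>z\<in>S. op x (op y z) = op (op x y) (op x z)"
  shows "set s \<subseteq> S \<Longrightarrow> set u \<subseteq> S \<Longrightarrow> t \<in> S \<Longrightarrow>
     foldr op s (foldr op u t) = foldr op (map (foldr op s) u) (foldr op s t)"
proof (induction u)
  case Nil then show ?case by simp
next
  case (Cons b u)
  then have "foldr op u t \<in> S" "b \<in> S"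
    using F_closed[OF cl] by auto
  have "foldr op s (op b (foldr op u t)) = op (foldr op s b) (foldr op s (foldr op u t))"
    using F_dist[OF cl ld] Cons.prems \<open>foldr op u t \<in> S\<close> \<open>b \<in> S\<close> by blast
  moreover have "foldr op s (foldr op u t) = foldr op (map (foldr op s) u) (foldr op s t)"
    using Cons.IH Cons.prems by simp
  ultimately show ?case by (simp only: foldr.simps list.map o_apply)
qed

theorem lemma1p7:
  fixes S :: "'a set" and op :: "'a \<Rightarrow> 'a \<Rightarrow> 'a"
  assumes "LD_system S op"
  shows "ALD_system (seqs S) (vec_op op) (\<lambda>s t. s @ t)"
proof -
  have cl: "\<forall>x\<in>S. \<forall>y\<in>S. op x y \<in> S"
    and ld: "\<forall>x\<in>S. \<forall>y\<in>S. \<forall>z\<in>S. op x (op y z) = op (op x y) (op x z)"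
    using assms unfolding LD_system_def by blast+
  have A: "\<forall>x\<in>seqs S. \<forall>y\<in>seqs S. vec_op op x y \<in> seqs S"
  proof (intro ballI)
    fix x y assume "x \<in> seqs S" "y \<in> seqs S"
    then have "x \<noteq> [] \<and> set x \<subseteq> S" "y \<noteq> [] \<and> set y \<subseteq> S" unfolding seqs_def by auto
    then have "set (map (foldr op x) y) \<subseteq> S" using F_closed[OF cl] by auto
    then show "vec_op op x y \<in> seqs S"
      unfolding seqs_def vec_op_def iter_op_def using \<open>y \<noteq> [] \<and> _\<close> by simp
  qed
  have B: "\<forall>x\<in>seqs S. \<forall>y\<in>seqs S. x @ y \<in> seqs S"
    unfolding seqs_def by auto
  have C: "\<forall>x\<in>seqs S. \<forall>y\<in>seqs S. \<forall>z\<in>seqs S.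
      vec_op op x (vec_op op y z) = vec_op op (vec_op op x y) (vec_op op x z)"
  proof (intro ballI)
    fix x y z assume "x \<in> seqs S" "y \<in> seqs S" "z \<in> seqs S"
    then have h: "set x \<subseteq> S" "set y \<subseteq> S" "set z \<subseteq> S" unfolding seqs_def by auto
    have "map (foldr op x) (map (foldr op y) z) =
       map (foldr op (map (foldr op x) y)) (map (foldr op x) z)"
      unfolding map_map
    proof (rule map_cong[OF refl])
      fix w assume "w \<in> set z"
      then have "w \<in> S" using h by auto
      then show "(foldr op x \<circ> foldr op y) w = (foldr op (map (foldr op x) y) \<circ> foldr op x) w"
        using F_gen[OF cl ld h(1) h(2) \<open>w \<in> S\<close>] by (simp only: o_apply)
    qed
    then show "vec_op op x (vec_op op y z) = vec_op op (vec_op op x y) (vec_op op x z)"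
      unfolding vec_op_def iter_op_def .
  qed
  have D: "\<forall>x\<in>seqs S. \<forall>y\<in>seqs S. \<forall>z\<in>seqs S.
      vec_op op x (vec_op op y z) = vec_op op (x @ y) z"
    unfolding vec_op_def iter_op_def by (simp add: foldr_append o_def)
  have E: "\<forall>x\<in>seqs S. \<forall>y\<in>seqs S. \<forall>z\<in>seqs S.
      vec_op op x (y @ z) = vec_op op x y @ vec_op op x z"
    unfolding vec_op_def by simp
  show ?thesis unfolding ALD_system_def using A B C D E by blast
qed

end
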